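(* Let $A$ and $G$ be selfadjoint operators in the Hilbert space $\mathcal H$. Each of the following conditions implies that $\rho(AG)\neq\emptyset$ and $\rho(GA)\neq\emptyset$: (a) $G$ is bounded and $\rho(GA)\neq\emptyset$; (b) $G$ is boundedly invertible and $\rho(AG)\neq\emptyset$; (c) $(AG)^*=GA$ and $\rho(AG)\neq\emptyset$; (d) $\rho(AG)\neq\emptyset$, $GA$ is closed, and for some $\lambda\in\rho(AG)\setminus\{0\}$ the operator $G(AG-\lambda)^{-1}A$ is bounded on $\operatorname{dom}A$.
   Context: $(\mathcal H,(\cdot,\cdot))$ is a complex Hilbert space; $A,G$ are possibly unbounded selfadjoint operators, and $AG$, $GA$ denote the usual operator products with their natural domains. For a linear operator $S$, $\rho(S)$ is the set of $\lambda\in\mathbb C$ such that $S-\lambda$ is injective, $\operatorname{ran}(S-\lambda)=\mathcal H$ and $(S-\lambda)^{-1}$ is bounded and everywhere defined. $S$ is boundedly invertible if $0\in\rho(S)$. *)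

theory Defs
  imports "HOL-Analysis.Analysis"
begin

text \<open>Complex Hilbert spaces: the library only has real inner product spaces, so we
introduce the class of complex Hilbert spaces (complete complex inner product spaces).\<close>

class chilbert_space = banach +
  fixes scaleC :: "complex \<Rightarrow> 'a \<Rightarrow> 'a" (infixr "*\<^sub>C" 75)
    and cinner :: "'a \<Rightarrow> 'a \<Rightarrow> complex"
  assumes scaleC_add_right: "a *\<^sub>C (x + y) = a *\<^sub>C x + a *\<^sub>C y"
    and scaleC_add_left: "(a + b) *\<^sub>C x = a *\<^sub>C x + b *\<^sub>C x"
    and scaleC_scaleC: "a *\<^sub>C (b *\<^sub>C x) = (a * b) *\<^sub>C x"
    and scaleC_one: "1 *\<^sub>C x = x"
    and scaleR_scaleC: "scaleR r x = complex_of_real r *\<^sub>C x"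
    and cinner_commute: "cinner x y = cnj (cinner y x)"
    and cinner_add_right: "cinner x (y + z) = cinner x y + cinner x z"
    and cinner_scaleC_right: "cinner x (a *\<^sub>C y) = a * cinner x y"
    and norm_cinner: "norm x = sqrt (Re (cinner x x))"

text \<open>A (possibly unbounded) linear operator is given by its domain and its action.\<close>
type_synonym 'a op = "'a set \<times> ('a \<Rightarrow> 'a)"

definition dom :: "'a op \<Rightarrow> 'a set" where "dom S = fst S"
definition app :: "'a op \<Rightarrow> 'a \<Rightarrow> 'a" where "app S = snd S"

definition op_prod :: "'a op \<Rightarrow> 'a op \<Rightarrow> 'a op" (infixl "\<bullet>\<^sub>o\<^sub>p" 70) where
  "S \<bullet>\<^sub>o\<^sub>p T = ({x \<in> dom T. app T x \<in> dom S}, \<lambda>x. app S (app T x))"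

definition is_adjoint :: "'a::chilbert_space op \<Rightarrow> 'a op \<Rightarrow> bool" where
  "is_adjoint S T \<longleftrightarrow> closure (dom S) = UNIV \<and>
     dom T = {y. \<exists>z. \<forall>x\<in>dom S. cinner (app S x) y = cinner x z} \<and>
     (\<forall>y\<in>dom T. \<forall>x\<in>dom S. cinner (app S x) y = cinner x (app T y))"

definition selfadjoint :: "'a::chilbert_space op \<Rightarrow> bool" where
  "selfadjoint S \<longleftrightarrow> is_adjoint S S"

definition shift :: "'a::chilbert_space op \<Rightarrow> complex \<Rightarrow> 'a \<Rightarrow> 'a" where
  "shift S \<mu> = (\<lambda>x. app S x - \<mu> *\<^sub>C x)"

text \<open>The inverse \<open>(S - \<mu>)\<^sup>-\<^sup>1\<close> (meaningful when \<open>S - \<mu>\<close> is injective on its domain).\<close>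
definition res :: "'a::chilbert_space op \<Rightarrow> complex \<Rightarrow> 'a \<Rightarrow> 'a" where
  "res S \<mu> = the_inv_into (dom S) (shift S \<mu>)"

definition resolvent_set :: "'a::chilbert_space op \<Rightarrow> complex set" ("\<rho>") where
  "\<rho> S = {\<mu>. inj_on (shift S \<mu>) (dom S) \<and> shift S \<mu> ` dom S = UNIV \<and>
             (\<exists>C. \<forall>y. norm (res S \<mu> y) \<le> C * norm y)}"

definition bounded_op :: "'a::chilbert_space op \<Rightarrow> bool" where
  "bounded_op S \<longleftrightarrow> (\<exists>C. \<forall>x\<in>dom S. norm (app S x) \<le> C * norm x)"

definition closed_op :: "'a::chilbert_space op \<Rightarrow> bool" where
  "closed_op S \<longleftrightarrow> closed {(x, app S x) | x. x \<in> dom S}"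

end

theory Submission
  imports Defs
begin

declare [[show_types=false]]


lemma cinner_add_left: "cinner (x + y) z = cinner x z + cinner y z"
proof -
  have "cinner (x + y) z = cnj (cinner z (x + y))" by (rule cinner_commute)
  also have "\<dots> = cnj (cinner z x) + cnj (cinner z y)" by (simp add: cinner_add_right)
  also have "\<dots> = cinner x z + cinner y z" by (simp add: cinner_commute[of x z] cinner_commute[of y z])
  finally show ?thesis .
qed

lemma cinner_scaleC_left: "cinner (a *\<^sub>C x) y = cnj a * cinner x y"
proof -
  have "cinner (a *\<^sub>C x) y = cnj (cinner y (a *\<^sub>C x))" by (rule cinner_commute)
  also have "\<dots> = cnj a * cnj (cinner y x)" by (simp add: cinner_scaleC_right)
  also have "\<dots> = cnj a * cinner x y" by (simp add: cinner_commute[of x y])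
  finally show ?thesis .
qed

lemma cinner_zero_right[simp]: "cinner x 0 = 0"
  using cinner_add_right[of x 0 0] by simp

lemma cinner_zero_left[simp]: "cinner 0 x = 0"
  using cinner_add_left[of 0 0 x] by simp

lemma scaleC_real: "complex_of_real r *\<^sub>C x = scaleR r x"
  by (simp add: scaleR_scaleC)

lemma scaleC_minus_one: "(-1) *\<^sub>C x = - x"
  using scaleC_real[of "-1" x] by simp

lemma scaleC_zero_left[simp]: "0 *\<^sub>C x = 0"
  using scaleC_real[of 0 x] by simp

lemma scaleC_zero_right[simp]: "a *\<^sub>C 0 = 0"
  using scaleC_add_right[of a 0 0] by simp

lemma scaleC_one'[simp]: "1 *\<^sub>C x = x" by (rule scaleC_one)

lemma scaleC_minus_right: "a *\<^sub>C (- x) = - (a *\<^sub>C x)"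
  using scaleC_add_right[of a "-x" x] by (simp add: eq_neg_iff_add_eq_0)

lemma scaleC_minus_left: "(- a) *\<^sub>C x = - (a *\<^sub>C x)"
  using scaleC_add_left[of "-a" a x] by (simp add: eq_neg_iff_add_eq_0)

lemma scaleC_diff_right: "a *\<^sub>C (x - y) = a *\<^sub>C x - a *\<^sub>C y"
  unfolding diff_conv_add_uminus by (simp only: scaleC_add_right scaleC_minus_right)

lemma scaleC_diff_left: "(a - b) *\<^sub>C x = a *\<^sub>C x - b *\<^sub>C x"
  unfolding diff_conv_add_uminus by (simp only: scaleC_add_left scaleC_minus_left)

lemma cinner_minus_right: "cinner x (- y) = - cinner x y"
  using cinner_add_right[of x "-y" y] by (simp add: eq_neg_iff_add_eq_0)

lemma cinner_minus_left: "cinner (- x) y = - cinner x y"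
  using cinner_add_left[of "-x" x y] by (simp add: eq_neg_iff_add_eq_0)

lemma cinner_diff_right: "cinner x (y - z) = cinner x y - cinner x z"
  unfolding diff_conv_add_uminus by (simp only: cinner_add_right cinner_minus_right)

lemma cinner_diff_left: "cinner (x - y) z = cinner x z - cinner y z"
  unfolding diff_conv_add_uminus by (simp only: cinner_add_left cinner_minus_left)

lemma cinner_self_Im: "Im (cinner x x) = 0"
proof -
  have "Im (cinner x x) = Im (cnj (cinner x x))" using cinner_commute[of x x] by (rule arg_cong)
  then show ?thesis by simp
qed

lemma cinner_self_Re: "Re (cinner x x) = (norm x)^2"
proof -
  have "Re (cinner x x) \<ge> 0"
  proof (rule ccontr)
    assume "\<not> ?thesis"
    then have "sqrt (Re (cinner x x)) < 0" by simp
    then show False using norm_cinner[of x] norm_ge_zero[of x] by linarith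
  qed
  then show ?thesis using norm_cinner[of x] by simp
qed

lemma cinner_self: "cinner x x = complex_of_real ((norm x)^2)"
  using cinner_self_Im cinner_self_Re complex_eq_iff by auto

lemma cinner_self_eq_0: "cinner x x = 0 \<longleftrightarrow> x = 0"
  by (simp add: cinner_self)

lemma norm_scaleC: "norm (a *\<^sub>C x) = cmod a * norm x"
proof -
  have "cinner (a *\<^sub>C x) (a *\<^sub>C x) = (a * cnj a) * cinner x x"
    by (simp add: cinner_scaleC_left cinner_scaleC_right mult.commute mult.left_commute)
  also have "\<dots> = complex_of_real ((cmod a * norm x)^2)"
    by (simp add: complex_norm_square[symmetric] cinner_self power_mult_distrib)
  finally have "(norm (a *\<^sub>C x))^2 = (cmod a * norm x)^2"
    by (simp only: cinner_self of_real_eq_iff)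
  then show ?thesis by (simp add: power2_eq_iff_nonneg)
qed



lemma cnj_mult_self: "cnj a * a = complex_of_real ((cmod a)^2)"
  by (metis complex_norm_square mult.commute)

lemma cauchy_schwarz: "cmod (cinner x y) \<le> norm x * norm y"
proof (cases "y = 0")
  case True then show ?thesis by simp
next
  case False
  define a where "a = cinner x y"
  define N where "N = (norm y)^2"
  have Npos: "N > 0" using False by (simp add: N_def)
  have yy: "cinner y y = complex_of_real N" by (simp add: N_def cinner_self)
  have yx: "cinner y x = cnj a" by (simp add: a_def cinner_commute[of y x])
  define t where "t = cnj a / complex_of_real N"
  define r where "r = (cmod a)^2 / N"
  have e1: "cinner (x - t *\<^sub>C y) (x - t *\<^sub>C y)
        = cinner x x - t * a - cnj t * cnj a + cnj t * t * cinner y y"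
    by (simp add: cinner_diff_left cinner_diff_right cinner_scaleC_left cinner_scaleC_right
        yx a_def algebra_simps)
  have ta: "t * a = complex_of_real r"
    by (simp add: t_def r_def cnj_mult_self)
  have ta2: "cnj t * cnj a = complex_of_real r"
  proof -
    have "cnj t * cnj a = cnj (t * a)" by simp
    then show ?thesis by (simp add: ta)
  qed
  have tN: "t * complex_of_real N = cnj a" using Npos by (simp add: t_def)
  have tt: "cnj t * t * cinner y y = complex_of_real r"
    by (simp add: yy mult.assoc tN ta2)
  have "cinner (x - t *\<^sub>C y) (x - t *\<^sub>C y) = complex_of_real ((norm x)^2 - r)"
    unfolding e1 ta ta2 tt by (simp add: cinner_self)
  then have "(norm (x - t *\<^sub>C y))^2 = (norm x)^2 - r"
    by (simp only: cinner_self of_real_eq_iff)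
  then have "r \<le> (norm x)^2" by (metis diff_ge_0_iff_ge zero_le_power2)
  then have "(cmod a)^2 \<le> (norm x)^2 * N" using Npos by (simp add: r_def divide_le_eq)
  then have "(cmod a)^2 \<le> (norm x * norm y)^2" by (simp add: N_def power_mult_distrib)
  then show ?thesis unfolding a_def by (simp add: abs_le_square_iff)
qed

lemma bounded_linear_cinner_left:
  fixes y :: "'a::chilbert_space"
  shows "bounded_linear (\<lambda>x. cinner x y)"
proof (rule bounded_linear_intro[where K = "norm y"])
  show "cinner (x + z) y = cinner x y + cinner z y" for x z :: 'a by (rule cinner_add_left)
  show "cinner (r *\<^sub>R x) y = r *\<^sub>R cinner x y" for r and x :: 'a
    by (simp add: scaleR_scaleC cinner_scaleC_left scaleR_conv_of_real)
  show "norm (cinner x y) \<le> norm x * norm y" for x :: 'a by (rule cauchy_schwarz)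
qed

lemma bounded_linear_cinner_right:
  fixes x :: "'a::chilbert_space"
  shows "bounded_linear (\<lambda>y. cinner x y)"
proof (rule bounded_linear_intro[where K = "norm x"])
  show "cinner x (y + z) = cinner x y + cinner x z" for y z :: 'a by (rule cinner_add_right)
  show "cinner x (r *\<^sub>R y) = r *\<^sub>R cinner x y" for r and y :: 'a
    by (simp add: scaleR_scaleC cinner_scaleC_right scaleR_conv_of_real)
  show "norm (cinner x y) \<le> norm y * norm x" for y :: 'a
    using cauchy_schwarz[of x y] by (simp add: mult.commute)
qed

lemma dense_unique:
  fixes a b :: "'a::chilbert_space"
  assumes "closure D = UNIV" "\<And>u. u \<in> D \<Longrightarrow> cinner u a = cinner u b"
  shows "a = b"
proof -
  have "a - b \<in> closure D" using assms(1) by simp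
  then obtain u where u: "\<And>n. u n \<in> D" "u \<longlonglongrightarrow> a - b"
    unfolding closure_sequential by blast
  have l1: "(\<lambda>n. cinner (u n) (a - b)) \<longlonglongrightarrow> cinner (a - b) (a - b)"
    using bounded_linear.tendsto[OF bounded_linear_cinner_left u(2)] .
  have "cinner (u n) (a - b) = 0" for n using assms(2)[OF u(1)] by (simp add: cinner_diff_right)
  then have l2: "(\<lambda>n. cinner (u n) (a - b)) \<longlonglongrightarrow> 0" by simp
  have "cinner (a - b) (a - b) = 0" using LIMSEQ_unique[OF l1 l2] .
  then show ?thesis by (simp add: cinner_self_eq_0)
qed

lemma parallelogram:
  fixes x y :: "'a::chilbert_space"
  shows "(norm (x + y))^2 + (norm (x - y))^2 = 2 * (norm x)^2 + 2 * (norm y)^2"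
proof -
  have "cinner (x + y) (x + y) + cinner (x - y) (x - y) = 2 * cinner x x + 2 * cinner y y"
    by (simp add: cinner_add_left cinner_add_right cinner_diff_left cinner_diff_right)
  then have "complex_of_real ((norm (x + y))^2 + (norm (x - y))^2) = complex_of_real (2 * (norm x)^2 + 2 * (norm y)^2)"
    by (simp add: cinner_self)
  then show ?thesis by (simp only: of_real_eq_iff)
qed



lemma orth_of_min:
  fixes x0 m :: "'a::chilbert_space"
  assumes "\<And>t. norm x0 \<le> norm (x0 - t *\<^sub>C m)"
  shows "cinner x0 m = 0"
proof -
  define a where "a = cinner x0 m"
  define M where "M = (norm m)^2"
  define s where "s = 1 / (M + 1)"
  have M0: "M \<ge> 0" by (simp add: M_def)
  have s0: "s > 0" using M0 by (simp add: s_def)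
  have sM: "s * M < 1" using M0 by (simp add: s_def field_simps)
  define t where "t = complex_of_real s * cnj a"
  have mx: "cinner m x0 = cnj a" by (simp add: a_def cinner_commute[of m x0])
  have e1: "cinner (x0 - t *\<^sub>C m) (x0 - t *\<^sub>C m)
        = cinner x0 x0 - t * a - cnj t * cnj a + cnj t * t * cinner m m"
    by (simp add: cinner_diff_left cinner_diff_right cinner_scaleC_left cinner_scaleC_right
        mx a_def algebra_simps)
  have ta: "t * a = complex_of_real (s * (cmod a)^2)"
    by (simp add: t_def mult.assoc cnj_mult_self)
  have ta2: "cnj t * cnj a = complex_of_real (s * (cmod a)^2)"
  proof -
    have "cnj t * cnj a = cnj (t * a)" by simp
    then show ?thesis by (simp only: ta complex_cnj_complex_of_real)
  qed
  have ct: "cmod t = s * cmod a" using s0 by (simp add: t_def norm_mult)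
  have tt: "cnj t * t * cinner m m = complex_of_real (s^2 * (cmod a)^2 * M)"
    by (simp add: cnj_mult_self ct cinner_self M_def power_mult_distrib)
  have "cinner (x0 - t *\<^sub>C m) (x0 - t *\<^sub>C m)
      = complex_of_real ((norm x0)^2 - 2 * s * (cmod a)^2 + s^2 * (cmod a)^2 * M)"
    unfolding e1 ta ta2 tt by (simp add: cinner_self)
  then have eq: "(norm (x0 - t *\<^sub>C m))^2 = (norm x0)^2 - 2 * s * (cmod a)^2 + s^2 * (cmod a)^2 * M"
    by (simp only: cinner_self of_real_eq_iff)
  have "(norm x0)^2 \<le> (norm (x0 - t *\<^sub>C m))^2"
    using assms[of t] by (simp add: power_mono)
  with eq have "0 \<le> s * (cmod a)^2 * (s * M - 2)" by (simp add: algebra_simps power2_eq_square)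
  moreover have "s * M - 2 < 0" using sM by simp
  ultimately have "s * (cmod a)^2 \<le> 0" by (simp add: mult_le_0_iff zero_le_mult_iff)
  then have "(cmod a)^2 \<le> 0" using s0 by (simp add: mult_le_0_iff)
  then show ?thesis unfolding a_def by simp
qed

lemma riesz:
  fixes f :: "'a::chilbert_space \<Rightarrow> complex"
  assumes add: "\<And>x y. f (x + y) = f x + f y"
    and hom: "\<And>c x. f (c *\<^sub>C x) = c * f x"
    and bnd: "\<And>x. cmod (f x) \<le> K * norm x"
  shows "\<exists>y. \<forall>x. f x = cinner y x"
proof (cases "\<forall>x. f x = 0")
  case True then show ?thesis by (intro exI[of _ 0]) simp
next
  case False
  have bl: "bounded_linear f"
  proof (rule bounded_linear_intro[where K = K])
    show "f (x + y) = f x + f y" for x y by (rule add)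
    show "f (r *\<^sub>R x) = r *\<^sub>R f x" for r x
      by (simp add: scaleR_scaleC hom scaleR_conv_of_real)
    show "norm (f x) \<le> norm x * K" for x using bnd[of x] by (simp add: mult.commute)
  qed
  have f0: "f 0 = 0" using add[of 0 0] by simp
  from False obtain e where e: "f e \<noteq> 0" by blast
  define S where "S = {x. f x = 1}"
  have e1: "(1 / f e) *\<^sub>C e \<in> S" using e by (simp add: S_def hom)
  define d where "d = Inf (norm ` S)"
  have bdd: "bdd_below (norm ` S)" by (rule bdd_belowI[of _ 0]) auto
  have dle: "d \<le> norm x" if "x \<in> S" for x
    unfolding d_def using bdd that by (simp add: cInf_lower)
  have d0: "d \<ge> 0" unfolding d_def using e1 by (intro cInf_greatest) auto
  have "\<exists>x\<in>S. (norm x)^2 < d^2 + 1 / (real n + 1)" for n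
  proof -
    define v where "v = d^2 + 1 / (real n + 1)"
    have v0: "v \<ge> 0" by (simp add: v_def add_nonneg_nonneg)
    have "d^2 < v" by (simp add: v_def)
    then have "sqrt (d^2) < sqrt v" by (rule real_sqrt_less_mono)
    then have dv: "d < sqrt v" using d0 by simp
    have "Inf (norm ` S) < sqrt v" using dv by (simp add: d_def)
    then obtain z where "z \<in> norm ` S" "z < sqrt v"
      using cInf_lessD[of "norm ` S" "sqrt v"] e1 by blast
    then obtain x where x: "x \<in> S" "norm x < sqrt v" by blast
    have "(norm x)^2 < (sqrt v)^2" using x(2) by (intro power_strict_mono) auto
    also have "(sqrt v)^2 = v" using v0 by simp
    finally show ?thesis using x(1) by (auto simp: v_def)
  qed
  then obtain xs where xs: "\<And>n. xs n \<in> S" "\<And>n. (norm (xs n))^2 < d^2 + 1 / (real n + 1)"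
    by metis
  have mid: "norm (x + y) \<ge> 2 * d" if "x \<in> S" "y \<in> S" for x y
  proof -
    have "(1/2::real) *\<^sub>R (x + y) \<in> S"
      using that by (simp add: S_def scaleR_scaleC hom add)
    then have "d \<le> norm ((1/2::real) *\<^sub>R (x + y))" by (rule dle)
    then show ?thesis by simp
  qed
  have dist_bound: "(norm (xs m - xs n))^2 \<le> 2 / (real m + 1) + 2 / (real n + 1)" for m n
  proof -
    have p: "(norm (xs m + xs n))^2 + (norm (xs m - xs n))^2 = 2 * (norm (xs m))^2 + 2 * (norm (xs n))^2"
      by (rule parallelogram)
    have "(2 * d)^2 \<le> (norm (xs m + xs n))^2"
      using power_mono[OF mid[OF xs(1) xs(1), of m n], of 2] d0 by simp
    moreover have "(2 * d)^2 = 4 * d^2" by (simp add: power_mult_distrib)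
    ultimately show ?thesis using p xs(2)[of m] xs(2)[of n] by linarith
  qed
  have "Cauchy xs"
  proof (rule metric_CauchyI)
    fix r :: real assume r: "r > 0"
    obtain N :: nat where N: "4 / r^2 < real N" using reals_Archimedean2 by blast
    have r2: "r^2 > 0" using r by simp
    have "4 < real N * r^2" using N r2 by (simp add: pos_divide_less_eq)
    moreover have "(real N + 1) * r^2 = real N * r^2 + r^2" by (simp add: algebra_simps)
    ultimately have "4 < (real N + 1) * r^2" using r2 by linarith
    then have N4: "4 / (real N + 1) < r^2" by (simp add: pos_divide_less_eq mult.commute)
    show "\<exists>M. \<forall>m\<ge>M. \<forall>n\<ge>M. dist (xs m) (xs n) < r"
    proof (intro exI allI impI)
      fix m n assume mn: "N \<le> m" "N \<le> n"
      have "2 / (real m + 1) \<le> 2 / (real N + 1)"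
        using mn by (intro divide_left_mono) auto
      moreover have "2 / (real n + 1) \<le> 2 / (real N + 1)"
        using mn by (intro divide_left_mono) auto
      moreover have "2 / (real N + 1) + 2 / (real N + 1) = 4 / (real N + 1)"
        by (simp add: add_divide_distrib[symmetric])
      ultimately have "(norm (xs m - xs n))^2 < r^2" using dist_bound[of m n] N4 by linarith
      then show "dist (xs m) (xs n) < r" using r
        by (simp add: dist_norm power_less_imp_less_base)
    qed
  qed
  then obtain x0 where x0: "xs \<longlonglongrightarrow> x0" using convergent_eq_Cauchy by blast
  have "(\<lambda>n. f (xs n)) \<longlonglongrightarrow> f x0" using bounded_linear.tendsto[OF bl x0] .
  moreover have "f (xs n) = 1" for n using xs(1)[of n] by (simp add: S_def)
  then have "(\<lambda>n. f (xs n)) \<longlonglongrightarrow> 1" by simp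
  ultimately have fx0: "f x0 = 1" by (rule LIMSEQ_unique)
  have "(\<lambda>n. (norm (xs n))^2) \<longlonglongrightarrow> (norm x0)^2" by (intro tendsto_intros x0)
  moreover have "(\<lambda>n. d^2 + 1 / (real n + 1)) \<longlonglongrightarrow> d^2 + 0"
  proof (rule tendsto_add[OF tendsto_const])
    have eq: "(\<lambda>n. inverse (real (Suc n))) = (\<lambda>n. 1 / (real n + 1))"
      by (simp add: inverse_eq_divide add.commute)
    have "(\<lambda>n. inverse (real (Suc n))) \<longlonglongrightarrow> 0" by (rule LIMSEQ_inverse_real_of_nat)
    then show "(\<lambda>n. 1 / (real n + 1)) \<longlonglongrightarrow> 0" unfolding eq .
  qed
  moreover have "\<exists>N. \<forall>n\<ge>N. (norm (xs n))^2 \<le> d^2 + 1 / (real n + 1)"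
    using xs(2) less_imp_le by blast
  ultimately have "(norm x0)^2 \<le> d^2 + 0"
    by (rule LIMSEQ_le)
  then have "(norm x0)^2 \<le> d^2" by simp
  then have nx0: "norm x0 \<le> d" using d0 by (rule power2_le_imp_le)
  have orth: "cinner x0 m = 0" if "f m = 0" for m
  proof (rule orth_of_min)
    fix t
    have e: "x0 - t *\<^sub>C m = x0 + (-1) *\<^sub>C (t *\<^sub>C m)" by (simp add: scaleC_minus_one)
    have "x0 - t *\<^sub>C m \<in> S"
      using that fx0 unfolding e by (simp add: S_def add hom)
    then show "norm x0 \<le> norm (x0 - t *\<^sub>C m)" using dle[of "x0 - t *\<^sub>C m"] nx0 by linarith
  qed
  have x0nz: "x0 \<noteq> 0" using fx0 f0 by auto
  define N where "N = (norm x0)^2"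
  have N0: "N > 0" using x0nz by (simp add: N_def)
  show ?thesis
  proof (intro exI allI)
    fix x
    have e: "x - f x *\<^sub>C x0 = x + (-1) *\<^sub>C (f x *\<^sub>C x0)" by (simp add: scaleC_minus_one)
    have "f (x - f x *\<^sub>C x0) = 0"
      unfolding e by (simp add: add hom fx0)
    then have "cinner x0 (x - f x *\<^sub>C x0) = 0" by (rule orth)
    then have "cinner x0 x = f x * complex_of_real N"
      by (simp add: cinner_diff_right cinner_scaleC_right cinner_self N_def)
    then show "f x = cinner ((1 / complex_of_real N) *\<^sub>C x0) x"
      using N0 by (simp add: cinner_scaleC_left)
  qed
qed



lemma adjoint_exists:
  fixes R :: "'a::chilbert_space \<Rightarrow> 'a"
  assumes add: "\<And>x y. R (x + y) = R x + R y" and hom: "\<And>c x. R (c *\<^sub>C x) = c *\<^sub>C R x"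
    and bnd: "\<And>x. norm (R x) \<le> C * norm x"
  shows "\<exists>R'. (\<forall>y z. cinner (R y) z = cinner y (R' z)) \<and> (\<forall>z. norm (R' z) \<le> C * norm z)"
proof -
  have ex: "\<exists>v. \<forall>y. cinner (R y) z = cinner y v" for z
  proof -
    have "\<exists>v. \<forall>y. cinner z (R y) = cinner v y"
    proof (rule riesz[where K = "C * norm z"])
      show "cinner z (R (x + y)) = cinner z (R x) + cinner z (R y)" for x y
        by (simp add: add cinner_add_right)
      show "cinner z (R (c *\<^sub>C x)) = c * cinner z (R x)" for c x
        by (simp add: hom cinner_scaleC_right)
      show "cmod (cinner z (R x)) \<le> C * norm z * norm x" for x
      proof -
        have "cmod (cinner z (R x)) \<le> norm z * norm (R x)" by (rule cauchy_schwarz)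
        also have "\<dots> \<le> norm z * (C * norm x)" using bnd[of x] by (simp add: mult_left_mono)
        finally show ?thesis by (simp add: algebra_simps)
      qed
    qed
    then obtain v where v: "\<And>y. cinner z (R y) = cinner v y" by blast
    have "cinner (R y) z = cinner y v" for y
      using v[of y] by (metis cinner_commute)
    then show ?thesis by blast
  qed
  define R' where "R' z = (SOME v. \<forall>y. cinner (R y) z = cinner y v)" for z
  have R': "cinner (R y) z = cinner y (R' z)" for y z
    using someI_ex[OF ex[of z]] unfolding R'_def by blast
  have "norm (R' z) \<le> C * norm z" for z
  proof -
    define w where "w = R' z"
    have Cz: "0 \<le> C * norm z" using bnd[of z] norm_ge_zero order_trans by blast
    have "complex_of_real ((norm w)^2) = cinner (R w) z" by (simp add: R' w_def cinner_self)
    then have "(norm w)^2 = cmod (cinner (R w) z)" by (metis norm_of_real abs_power2 real_norm_def)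
    also have "\<dots> \<le> norm (R w) * norm z" by (rule cauchy_schwarz)
    also have "\<dots> \<le> C * norm w * norm z" using bnd[of w] by (simp add: mult_right_mono)
    finally have "norm w * norm w \<le> norm w * (C * norm z)" by (simp add: power2_eq_square algebra_simps)
    then show ?thesis unfolding w_def[symmetric]
      using Cz by (cases "norm w = 0") (auto simp: mult_le_cancel_left)
  qed
  with R' show ?thesis by blast
qed

definition linop :: "'a::chilbert_space op \<Rightarrow> bool" where
  "linop S \<longleftrightarrow> 0 \<in> dom S \<and>
     (\<forall>x\<in>dom S. \<forall>y\<in>dom S. x + y \<in> dom S \<and> app S (x + y) = app S x + app S y) \<and>
     (\<forall>c. \<forall>x\<in>dom S. c *\<^sub>C x \<in> dom S \<and> app S (c *\<^sub>C x) = c *\<^sub>C app S x)"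

lemma linopD:
  assumes "linop S"
  shows "0 \<in> dom S" "x \<in> dom S \<Longrightarrow> y \<in> dom S \<Longrightarrow> x + y \<in> dom S"
    "x \<in> dom S \<Longrightarrow> y \<in> dom S \<Longrightarrow> app S (x + y) = app S x + app S y"
    "x \<in> dom S \<Longrightarrow> c *\<^sub>C x \<in> dom S" "x \<in> dom S \<Longrightarrow> app S (c *\<^sub>C x) = c *\<^sub>C app S x"
  using assms unfolding linop_def by auto

lemma linop_diff:
  assumes "linop S" "x \<in> dom S" "y \<in> dom S"
  shows "x - y \<in> dom S" "app S (x - y) = app S x - app S y"
proof -
  have e: "x - y = x + (-1) *\<^sub>C y" by (simp add: scaleC_minus_one)
  show "x - y \<in> dom S" unfolding e using assms by (simp add: linopD)
  have yd: "(-1) *\<^sub>C y \<in> dom S" using assms linopD(4) by blast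
  have "app S (x + (-1) *\<^sub>C y) = app S x + app S ((-1) *\<^sub>C y)"
    using linopD(3)[OF assms(1,2) yd] .
  also have "app S ((-1) *\<^sub>C y) = (-1) *\<^sub>C app S y" using linopD(5)[OF assms(1,3)] .
  finally show "app S (x - y) = app S x - app S y" unfolding e by (simp add: scaleC_minus_one)
qed

lemma dom_prod: "dom (S \<bullet>\<^sub>o\<^sub>p T) = {x \<in> dom T. app T x \<in> dom S}"
  by (simp add: op_prod_def dom_def)

lemma app_prod: "app (S \<bullet>\<^sub>o\<^sub>p T) x = app S (app T x)"
  by (simp add: op_prod_def app_def)

lemma linop_app0: "linop S \<Longrightarrow> app S 0 = 0"
  using linopD(5)[of S 0 0] linopD(1)[of S] by simp

lemma linop_prod: "linop S \<Longrightarrow> linop T \<Longrightarrow> linop (S \<bullet>\<^sub>o\<^sub>p T)"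
  using linop_app0[of T] unfolding linop_def dom_prod app_prod by auto

lemma selfadjoint_sym:
  "selfadjoint S \<Longrightarrow> x \<in> dom S \<Longrightarrow> y \<in> dom S \<Longrightarrow> cinner (app S x) y = cinner x (app S y)"
  unfolding selfadjoint_def is_adjoint_def by blast

lemma selfadjoint_dense: "selfadjoint S \<Longrightarrow> closure (dom S) = UNIV"
  unfolding selfadjoint_def is_adjoint_def by blast

lemma selfadjoint_mem:
  assumes "selfadjoint S" "\<And>x. x \<in> dom S \<Longrightarrow> cinner (app S x) y = cinner x z"
  shows "y \<in> dom S" "app S y = z"
proof -
  have d: "dom S = {y. \<exists>z. \<forall>x\<in>dom S. cinner (app S x) y = cinner x z}"
    using assms(1) unfolding selfadjoint_def is_adjoint_def by blast
  show y: "y \<in> dom S" using assms(2) by (subst d) blast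
  show "app S y = z"
  proof (rule dense_unique[OF selfadjoint_dense[OF assms(1)]])
    fix u assume "u \<in> dom S"
    then show "cinner u (app S y) = cinner u z"
      using assms selfadjoint_sym[OF assms(1) _ y] by metis
  qed
qed

lemma selfadjoint_linop:
  assumes sa: "selfadjoint S" shows "linop S"
  unfolding linop_def
proof (intro conjI ballI allI)
  show "0 \<in> dom S" by (rule selfadjoint_mem(1)[OF sa, of 0 0]) simp
next
  fix x y assume xy: "x \<in> dom S" "y \<in> dom S"
  have *: "cinner (app S u) (x + y) = cinner u (app S x + app S y)" if "u \<in> dom S" for u
    using that xy by (simp add: cinner_add_right selfadjoint_sym[OF sa])
  show "x + y \<in> dom S" by (rule selfadjoint_mem(1)[OF sa *])
  show "app S (x + y) = app S x + app S y" by (rule selfadjoint_mem(2)[OF sa *])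
next
  fix c x assume x: "x \<in> dom S"
  have *: "cinner (app S u) (c *\<^sub>C x) = cinner u (c *\<^sub>C app S x)" if "u \<in> dom S" for u
    using that x by (simp add: cinner_scaleC_right selfadjoint_sym[OF sa])
  show "c *\<^sub>C x \<in> dom S" by (rule selfadjoint_mem(1)[OF sa *])
  show "app S (c *\<^sub>C x) = c *\<^sub>C app S x" by (rule selfadjoint_mem(2)[OF sa *])
qed



lemma shift_add:
  assumes "linop S" "x \<in> dom S" "y \<in> dom S"
  shows "shift S \<mu> (x + y) = shift S \<mu> x + shift S \<mu> y"
  using assms by (simp add: shift_def linopD scaleC_add_right algebra_simps)

lemma shift_scale:
  assumes "linop S" "x \<in> dom S"
  shows "shift S \<mu> (c *\<^sub>C x) = c *\<^sub>C shift S \<mu> x"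
  using assms by (simp add: shift_def linopD scaleC_diff_right scaleC_scaleC mult.commute)

lemma shift_diff:
  assumes "linop S" "x \<in> dom S" "y \<in> dom S"
  shows "shift S \<mu> (x - y) = shift S \<mu> x - shift S \<mu> y"
  using assms by (simp add: shift_def linop_diff scaleC_diff_right algebra_simps)

lemma rhoD:
  assumes "\<mu> \<in> \<rho> S"
  shows "inj_on (shift S \<mu>) (dom S)" "shift S \<mu> ` dom S = UNIV"
    "\<exists>C. \<forall>y. norm (res S \<mu> y) \<le> C * norm y"
  using assms unfolding resolvent_set_def by auto

lemma res_in: "\<mu> \<in> \<rho> S \<Longrightarrow> res S \<mu> y \<in> dom S"
  unfolding res_def using rhoD by (metis UNIV_I the_inv_into_into order_refl)

lemma res_right: "\<mu> \<in> \<rho> S \<Longrightarrow> shift S \<mu> (res S \<mu> y) = y"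
  unfolding res_def using rhoD by (metis UNIV_I f_the_inv_into_f)

lemma res_left: "\<mu> \<in> \<rho> S \<Longrightarrow> x \<in> dom S \<Longrightarrow> res S \<mu> (shift S \<mu> x) = x"
  unfolding res_def using rhoD by (metis the_inv_into_f_f)

lemma res_add:
  assumes "linop S" "\<mu> \<in> \<rho> S"
  shows "res S \<mu> (y1 + y2) = res S \<mu> y1 + res S \<mu> y2"
proof -
  have "shift S \<mu> (res S \<mu> y1 + res S \<mu> y2) = y1 + y2"
    using assms by (simp add: shift_add res_in res_right)
  then show ?thesis using res_left[OF assms(2), of "res S \<mu> y1 + res S \<mu> y2"] assms
    by (simp add: linopD res_in)
qed

lemma res_scale:
  assumes "linop S" "\<mu> \<in> \<rho> S"
  shows "res S \<mu> (c *\<^sub>C y) = c *\<^sub>C res S \<mu> y"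
proof -
  have "shift S \<mu> (c *\<^sub>C res S \<mu> y) = c *\<^sub>C y"
    using assms by (simp add: shift_scale res_in res_right)
  then show ?thesis using res_left[OF assms(2), of "c *\<^sub>C res S \<mu> y"] assms
    by (simp add: linopD res_in)
qed

lemma rho_intro:
  assumes lin: "linop T"
    and kern: "\<And>x. x \<in> dom T \<Longrightarrow> shift T \<mu> x = 0 \<Longrightarrow> x = 0"
    and sol: "\<And>z. \<exists>x\<in>dom T. shift T \<mu> x = z \<and> norm x \<le> C * norm z"
  shows "\<mu> \<in> \<rho> T"
proof -
  have inj: "inj_on (shift T \<mu>) (dom T)"
  proof (rule inj_onI)
    fix x y assume xy: "x \<in> dom T" "y \<in> dom T" "shift T \<mu> x = shift T \<mu> y"
    then have "shift T \<mu> (x - y) = 0" by (simp add: shift_diff lin)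
    then have "x - y = 0" using kern linop_diff[OF lin xy(1,2)] by blast
    then show "x = y" by simp
  qed
  have surj: "shift T \<mu> ` dom T = UNIV" using sol by (metis UNIV_eq_I imageI)
  have "norm (res T \<mu> z) \<le> C * norm z" for z
  proof -
    obtain x where x: "x \<in> dom T" "shift T \<mu> x = z" "norm x \<le> C * norm z" using sol by blast
    have "res T \<mu> z = x" unfolding res_def using inj x by (metis the_inv_into_f_f)
    with x show ?thesis by simp
  qed
  then show ?thesis unfolding resolvent_set_def using inj surj by blast
qed

definition adjpair :: "'a::chilbert_space op \<Rightarrow> 'a op \<Rightarrow> bool" where
  "adjpair S T \<longleftrightarrow> (\<forall>v\<in>dom S. \<forall>x\<in>dom T. cinner (app S v) x = cinner v (app T x))"

lemma adjpair_prod: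
  assumes "selfadjoint A" "selfadjoint G"
  shows "adjpair (A \<bullet>\<^sub>o\<^sub>p G) (G \<bullet>\<^sub>o\<^sub>p A)"
  unfolding adjpair_def dom_prod app_prod
  using assms by (auto simp: selfadjoint_sym)

lemma kern_adj:
  assumes lin: "linop T" and ap: "adjpair S T" and mu: "\<mu> \<in> \<rho> S"
    and x: "x \<in> dom T" "shift T (cnj \<mu>) x = 0"
  shows "x = 0"
proof -
  define v where "v = res S \<mu> x"
  have v: "v \<in> dom S" "shift S \<mu> v = x" using mu by (simp_all add: v_def res_in res_right)
  have "cinner x x = cinner (app S v - \<mu> *\<^sub>C v) x" using v(2) by (simp add: shift_def)
  also have "\<dots> = cinner v (app T x) - cinner v (cnj \<mu> *\<^sub>C x)"
    using ap v(1) x(1) by (simp add: adjpair_def cinner_diff_left cinner_scaleC_left cinner_scaleC_right)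
  also have "\<dots> = cinner v (shift T (cnj \<mu>) x)" by (simp add: shift_def cinner_diff_right)
  also have "\<dots> = 0" using x(2) by simp
  finally show ?thesis by (simp add: cinner_self_eq_0)
qed

lemma adj_res:
  assumes lin: "linop S" and mu: "\<mu> \<in> \<rho> S"
  shows "\<exists>R' C. (\<forall>z. \<forall>v\<in>dom S. cinner (app S v) (R' z) = cinner v (z + cnj \<mu> *\<^sub>C R' z))
               \<and> (\<forall>z. norm (R' z) \<le> C * norm z)"
proof -
  obtain C where C: "\<And>y. norm (res S \<mu> y) \<le> C * norm y" using rhoD(3)[OF mu] by blast
  obtain R' where R': "\<And>y z. cinner (res S \<mu> y) z = cinner y (R' z)"
    and B: "\<And>z. norm (R' z) \<le> C * norm z"
    using adjoint_exists[of "res S \<mu>" C] res_add[OF lin mu] res_scale[OF lin mu] C by blast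
  have "cinner (app S v) (R' z) = cinner v (z + cnj \<mu> *\<^sub>C R' z)" if v: "v \<in> dom S" for z v
  proof -
    have "app S v = shift S \<mu> v + \<mu> *\<^sub>C v" by (simp add: shift_def)
    then have "cinner (app S v) (R' z) = cinner (shift S \<mu> v) (R' z) + cnj \<mu> * cinner v (R' z)"
      by (simp add: cinner_add_left cinner_scaleC_left)
    also have "cinner (shift S \<mu> v) (R' z) = cinner v z"
      using R'[of "shift S \<mu> v" z] res_left[OF mu v] by simp
    finally show ?thesis by (simp add: cinner_add_right cinner_scaleC_right)
  qed
  with B show ?thesis by blast
qed



lemma cauchy_lip:
  fixes X :: "nat \<Rightarrow> 'a::real_normed_vector" and Z :: "nat \<Rightarrow> 'b::real_normed_vector"
  assumes "Cauchy Z" "\<And>m n. norm (X m - X n) \<le> K * norm (Z m - Z n)"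
  shows "Cauchy X"
proof (rule metric_CauchyI)
  fix e :: real assume e: "e > 0"
  define K' where "K' = \<bar>K\<bar> + 1"
  have K': "K' > 0" by (simp add: K'_def)
  obtain M where M: "\<And>m n. m \<ge> M \<Longrightarrow> n \<ge> M \<Longrightarrow> dist (Z m) (Z n) < e / K'"
    using assms(1) e K' unfolding Cauchy_def by (meson divide_pos_pos)
  show "\<exists>M. \<forall>m\<ge>M. \<forall>n\<ge>M. dist (X m) (X n) < e"
  proof (intro exI allI impI)
    fix m n assume mn: "M \<le> m" "M \<le> n"
    have "norm (X m - X n) \<le> K' * norm (Z m - Z n)"
      using assms(2)[of m n] unfolding K'_def
      by (smt (verit) mult_right_mono norm_ge_zero abs_ge_self)
    also have "\<dots> < e" using M[OF mn] K' by (simp add: dist_norm pos_less_divide_eq mult.commute)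
    finally show "dist (X m) (X n) < e" by (simp add: dist_norm)
  qed
qed

lemma case_c:
  assumes adj: "is_adjoint S T" and linS: "linop S" and linT: "linop T" and mu: "\<mu> \<in> \<rho> S"
  shows "cnj \<mu> \<in> \<rho> T"
proof -
  have dense: "closure (dom S) = UNIV"
    and domT: "dom T = {y. \<exists>z. \<forall>x\<in>dom S. cinner (app S x) y = cinner x z}"
    and sym: "\<And>y x. y \<in> dom T \<Longrightarrow> x \<in> dom S \<Longrightarrow> cinner (app S x) y = cinner x (app T y)"
    using adj unfolding is_adjoint_def by blast+
  have ap: "adjpair S T" unfolding adjpair_def using sym by blast
  obtain R' C where R': "\<And>z v. v \<in> dom S \<Longrightarrow> cinner (app S v) (R' z) = cinner v (z + cnj \<mu> *\<^sub>C R' z)"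
    and B: "\<And>z. norm (R' z) \<le> C * norm z"
    using adj_res[OF linS mu] by blast
  show ?thesis
  proof (rule rho_intro[OF linT, where C = C])
    show "x \<in> dom T \<Longrightarrow> shift T (cnj \<mu>) x = 0 \<Longrightarrow> x = 0" for x
      by (rule kern_adj[OF linT ap mu])
  next
    fix z
    have y: "R' z \<in> dom T" unfolding domT using R' by blast
    have "app T (R' z) = z + cnj \<mu> *\<^sub>C R' z"
    proof (rule dense_unique[OF dense])
      fix v assume "v \<in> dom S"
      then show "cinner v (app T (R' z)) = cinner v (z + cnj \<mu> *\<^sub>C R' z)"
        using sym[OF y] R' by metis
    qed
    then have "shift T (cnj \<mu>) (R' z) = z" by (simp add: shift_def)
    then show "\<exists>x\<in>dom T. shift T (cnj \<mu>) x = z \<and> norm x \<le> C * norm z" using y B by blast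
  qed
qed

lemma bounded_sa_dom:
  assumes sa: "selfadjoint G" and bd: "bounded_op G"
  shows "dom G = UNIV"
proof -
  obtain C where C: "\<And>x. x \<in> dom G \<Longrightarrow> norm (app G x) \<le> C * norm x"
    using bd unfolding bounded_op_def by blast
  have lin: "linop G" by (rule selfadjoint_linop[OF sa])
  have "closed (dom G)"
  proof (rule closed_sequential_limits[THEN iffD2], intro allI impI)
    fix x l assume xl: "(\<forall>n. x n \<in> dom G) \<and> x \<longlonglongrightarrow> l"
    then have xd: "\<And>n. x n \<in> dom G" and lim: "x \<longlonglongrightarrow> l" by auto
    have "Cauchy (\<lambda>n. app G (x n))"
    proof (rule cauchy_lip[OF LIMSEQ_imp_Cauchy[OF lim], where K = C])
      fix m n
      show "norm (app G (x m) - app G (x n)) \<le> C * norm (x m - x n)"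
        using C[OF linop_diff(1)[OF lin xd xd]] linop_diff(2)[OF lin xd xd] by metis
    qed
    then obtain w where w: "(\<lambda>n. app G (x n)) \<longlonglongrightarrow> w" using convergent_eq_Cauchy by blast
    have "cinner (app G u) l = cinner u w" if u: "u \<in> dom G" for u
    proof -
      have "(\<lambda>n. cinner (app G u) (x n)) \<longlonglongrightarrow> cinner (app G u) l"
        using bounded_linear.tendsto[OF bounded_linear_cinner_right lim] .
      moreover have "(\<lambda>n. cinner u (app G (x n))) \<longlonglongrightarrow> cinner u w"
        using bounded_linear.tendsto[OF bounded_linear_cinner_right w] .
      moreover have "cinner (app G u) (x n) = cinner u (app G (x n))" for n
        using selfadjoint_sym[OF sa u xd] .
      ultimately show ?thesis using LIMSEQ_unique by force
    qed
    then show "l \<in> dom G" by (rule selfadjoint_mem(1)[OF sa])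
  qed
  then show ?thesis using selfadjoint_dense[OF sa] by (simp add: closure_closed)
qed

lemma case_a:
  assumes saA: "selfadjoint A" and saG: "selfadjoint G" and bd: "bounded_op G"
    and mu: "\<mu> \<in> \<rho> (G \<bullet>\<^sub>o\<^sub>p A)"
  shows "cnj \<mu> \<in> \<rho> (A \<bullet>\<^sub>o\<^sub>p G)"
proof -
  have dG: "dom G = UNIV" by (rule bounded_sa_dom[OF saG bd])
  have linA: "linop A" and linG: "linop G" using saA saG by (simp_all add: selfadjoint_linop)
  have linS: "linop (G \<bullet>\<^sub>o\<^sub>p A)" and linT: "linop (A \<bullet>\<^sub>o\<^sub>p G)" using linA linG by (simp_all add: linop_prod)
  have ap: "adjpair (G \<bullet>\<^sub>o\<^sub>p A) (A \<bullet>\<^sub>o\<^sub>p G)" by (rule adjpair_prod[OF saG saA])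
  obtain R' C where R': "\<And>z v. v \<in> dom (G \<bullet>\<^sub>o\<^sub>p A) \<Longrightarrow>
        cinner (app (G \<bullet>\<^sub>o\<^sub>p A) v) (R' z) = cinner v (z + cnj \<mu> *\<^sub>C R' z)"
    and B: "\<And>z. norm (R' z) \<le> C * norm z"
    using adj_res[OF linS mu] by blast
  show ?thesis
  proof (rule rho_intro[OF linT, where C = C])
    show "x \<in> dom (A \<bullet>\<^sub>o\<^sub>p G) \<Longrightarrow> shift (A \<bullet>\<^sub>o\<^sub>p G) (cnj \<mu>) x = 0 \<Longrightarrow> x = 0" for x
      by (rule kern_adj[OF linT ap mu])
  next
    fix z
    define y where "y = R' z"
    have *: "cinner (app A u) (app G y) = cinner u (z + cnj \<mu> *\<^sub>C y)" if u: "u \<in> dom A" for u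
    proof -
      have "cinner (app A u) (app G y) = cinner (app G (app A u)) y"
        using selfadjoint_sym[OF saG, of "app A u" y] dG by simp
      also have "\<dots> = cinner u (z + cnj \<mu> *\<^sub>C y)"
        using R'[of u z] u dG by (simp add: dom_prod app_prod y_def)
      finally show ?thesis .
    qed
    have yd: "y \<in> dom (A \<bullet>\<^sub>o\<^sub>p G)" using selfadjoint_mem(1)[OF saA *] dG by (simp add: dom_prod)
    have "app (A \<bullet>\<^sub>o\<^sub>p G) y = z + cnj \<mu> *\<^sub>C y" using selfadjoint_mem(2)[OF saA *] by (simp add: app_prod)
    then have "shift (A \<bullet>\<^sub>o\<^sub>p G) (cnj \<mu>) y = z" by (simp add: shift_def)
    show "\<exists>x\<in>dom (A \<bullet>\<^sub>o\<^sub>p G). shift (A \<bullet>\<^sub>o\<^sub>p G) (cnj \<mu>) x = z \<and> norm x \<le> C * norm z"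
    proof -
      have "norm y \<le> C * norm z" using B[of z] by (simp add: y_def)
      then show ?thesis using yd \<open>shift _ _ y = z\<close> by blast
    qed
  qed
qed

lemma case_b:
  assumes saA: "selfadjoint A" and saG: "selfadjoint G" and G0: "0 \<in> \<rho> G"
    and mu: "\<mu> \<in> \<rho> (A \<bullet>\<^sub>o\<^sub>p G)"
  shows "cnj \<mu> \<in> \<rho> (G \<bullet>\<^sub>o\<^sub>p A)"
proof -
  have linA: "linop A" and linG: "linop G" using saA saG by (simp_all add: selfadjoint_linop)
  have linS: "linop (A \<bullet>\<^sub>o\<^sub>p G)" and linT: "linop (G \<bullet>\<^sub>o\<^sub>p A)" using linA linG by (simp_all add: linop_prod)
  have ap: "adjpair (A \<bullet>\<^sub>o\<^sub>p G) (G \<bullet>\<^sub>o\<^sub>p A)" by (rule adjpair_prod[OF saA saG])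
  define Gi where "Gi = res G 0"
  have Gi_in: "Gi u \<in> dom G" for u using res_in[OF G0] by (simp add: Gi_def)
  have GGi: "app G (Gi u) = u" for u using res_right[OF G0, of u] by (simp add: Gi_def shift_def)
  have Gi_sym: "cinner (Gi a) b = cinner a (Gi b)" for a b
    using selfadjoint_sym[OF saG Gi_in Gi_in, of a b] by (simp add: GGi)
  obtain R' C where R': "\<And>z v. v \<in> dom (A \<bullet>\<^sub>o\<^sub>p G) \<Longrightarrow>
        cinner (app (A \<bullet>\<^sub>o\<^sub>p G) v) (R' z) = cinner v (z + cnj \<mu> *\<^sub>C R' z)"
    and B: "\<And>z. norm (R' z) \<le> C * norm z"
    using adj_res[OF linS mu] by blast
  show ?thesis
  proof (rule rho_intro[OF linT, where C = C])
    show "x \<in> dom (G \<bullet>\<^sub>o\<^sub>p A) \<Longrightarrow> shift (G \<bullet>\<^sub>o\<^sub>p A) (cnj \<mu>) x = 0 \<Longrightarrow> x = 0" for x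
      by (rule kern_adj[OF linT ap mu])
  next
    fix z
    define y where "y = R' z"
    define w where "w = z + cnj \<mu> *\<^sub>C y"
    have *: "cinner (app A u) y = cinner u (Gi w)" if u: "u \<in> dom A" for u
    proof -
      have d: "Gi u \<in> dom (A \<bullet>\<^sub>o\<^sub>p G)" using u Gi_in GGi by (simp add: dom_prod)
      have "cinner (app A u) y = cinner (app (A \<bullet>\<^sub>o\<^sub>p G) (Gi u)) y" by (simp add: app_prod GGi)
      also have "\<dots> = cinner (Gi u) w" using R'[OF d, of z] by (simp add: y_def w_def)
      also have "\<dots> = cinner u (Gi w)" by (rule Gi_sym)
      finally show ?thesis .
    qed
    have yA: "y \<in> dom A" and Ay: "app A y = Gi w" using selfadjoint_mem[OF saA *] by auto
    have yd: "y \<in> dom (G \<bullet>\<^sub>o\<^sub>p A)" using yA Ay Gi_in by (simp add: dom_prod)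
    have "app (G \<bullet>\<^sub>o\<^sub>p A) y = w" using Ay GGi by (simp add: app_prod)
    then have "shift (G \<bullet>\<^sub>o\<^sub>p A) (cnj \<mu>) y = z" by (simp add: shift_def w_def)
    show "\<exists>x\<in>dom (G \<bullet>\<^sub>o\<^sub>p A). shift (G \<bullet>\<^sub>o\<^sub>p A) (cnj \<mu>) x = z \<and> norm x \<le> C * norm z"
    proof -
      have "norm y \<le> C * norm z" using B[of z] by (simp add: y_def)
      then show ?thesis using yd \<open>shift _ _ y = z\<close> by blast
    qed
  qed
qed



lemma bounded_linear_scaleC: "bounded_linear (\<lambda>x::'a::chilbert_space. c *\<^sub>C x)"
proof (rule bounded_linear_intro[where K = "cmod c"])
  show "c *\<^sub>C (x + y) = c *\<^sub>C x + c *\<^sub>C y" for x y :: 'a by (rule scaleC_add_right)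
  show "c *\<^sub>C (r *\<^sub>R x) = r *\<^sub>R (c *\<^sub>C x)" for r and x :: 'a
    by (simp add: scaleR_scaleC scaleC_scaleC mult.commute)
  show "norm (c *\<^sub>C x) \<le> norm x * cmod c" for x :: 'a by (simp add: norm_scaleC mult.commute)
qed

lemma case_d:
  assumes saA: "selfadjoint A" and saG: "selfadjoint G" and cl: "closed_op (G \<bullet>\<^sub>o\<^sub>p A)"
    and mu: "\<mu> \<in> \<rho> (A \<bullet>\<^sub>o\<^sub>p G)" and mu0: "\<mu> \<noteq> 0"
    and bnd: "\<forall>x\<in>dom A. norm (app G (res (A \<bullet>\<^sub>o\<^sub>p G) \<mu> (app A x))) \<le> C * norm x"
  shows "\<mu> \<in> \<rho> (G \<bullet>\<^sub>o\<^sub>p A)"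
proof -
  have linA: "linop A" and linG: "linop G" using saA saG by (simp_all add: selfadjoint_linop)
  have linS: "linop (A \<bullet>\<^sub>o\<^sub>p G)" and linT: "linop (G \<bullet>\<^sub>o\<^sub>p A)" using linA linG by (simp_all add: linop_prod)
  define R where "R = res (A \<bullet>\<^sub>o\<^sub>p G) \<mu>"
  have R0: "R 0 = 0" using res_scale[OF linS mu, of 0 0] by (simp add: R_def)
  have G0: "app G 0 = 0" using linopD(5)[OF linG linopD(1)[OF linG], of 0] by simp
  have kern: "x = 0" if x: "x \<in> dom (G \<bullet>\<^sub>o\<^sub>p A)" "shift (G \<bullet>\<^sub>o\<^sub>p A) \<mu> x = 0" for x
  proof -
    define u where "u = app A x"
    have xA: "x \<in> dom A" and uG: "u \<in> dom G" using x(1) by (simp_all add: dom_prod u_def)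
    have Gu: "app G u = \<mu> *\<^sub>C x" using x(2) by (simp add: shift_def app_prod u_def)
    have ud: "u \<in> dom (A \<bullet>\<^sub>o\<^sub>p G)" using uG Gu linopD(4)[OF linA xA] by (simp add: dom_prod)
    have "shift (A \<bullet>\<^sub>o\<^sub>p G) \<mu> u = 0"
      using Gu linopD(5)[OF linA xA, of \<mu>] by (simp add: shift_def app_prod u_def)
    then have "u = 0" using res_left[OF mu ud] R0 by (simp add: R_def)
    then have "\<mu> *\<^sub>C x = 0" using Gu G0 by simp
    then have "cmod \<mu> * norm x = 0" by (metis norm_scaleC norm_zero)
    then show "x = 0" using mu0 by simp
  qed
  define Tf where "Tf z = (1 / \<mu>) *\<^sub>C (app G (R (app A z)) - z)" for z
  have Tf: "Tf z \<in> dom (G \<bullet>\<^sub>o\<^sub>p A) \<and> shift (G \<bullet>\<^sub>o\<^sub>p A) \<mu> (Tf z) = z" if z: "z \<in> dom A" for z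
  proof -
    define v where "v = R (app A z)"
    have vd: "v \<in> dom (A \<bullet>\<^sub>o\<^sub>p G)" using res_in[OF mu] by (simp add: v_def R_def)
    then have vG: "v \<in> dom G" and GvA: "app G v \<in> dom A" by (simp_all add: dom_prod)
    have sv: "app A (app G v) - \<mu> *\<^sub>C v = app A z"
      using res_right[OF mu] by (simp add: v_def R_def shift_def app_prod)
    have Tfv: "Tf z = (1 / \<mu>) *\<^sub>C (app G v - z)" by (simp add: Tf_def v_def)
    have dA: "app G v - z \<in> dom A" using linop_diff(1)[OF linA GvA z] .
    have TA: "Tf z \<in> dom A" unfolding Tfv using linopD(4)[OF linA dA] .
    have "app A (Tf z) = (1 / \<mu>) *\<^sub>C (app A (app G v) - app A z)"
      unfolding Tfv using linopD(5)[OF linA dA] linop_diff(2)[OF linA GvA z] by simp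
    also have "app A (app G v) - app A z = \<mu> *\<^sub>C v" using sv by (simp add: algebra_simps)
    also have "(1 / \<mu>) *\<^sub>C (\<mu> *\<^sub>C v) = v" using mu0 by (simp add: scaleC_scaleC)
    finally have ATf: "app A (Tf z) = v" .
    have d: "Tf z \<in> dom (G \<bullet>\<^sub>o\<^sub>p A)" using TA ATf vG by (simp add: dom_prod)
    have "app (G \<bullet>\<^sub>o\<^sub>p A) (Tf z) = app G v" by (simp only: app_prod ATf)
    then have "shift (G \<bullet>\<^sub>o\<^sub>p A) \<mu> (Tf z) = app G v - \<mu> *\<^sub>C ((1 / \<mu>) *\<^sub>C (app G v - z))"
      unfolding shift_def by (simp only: Tfv)
    also have "\<dots> = z" using mu0 by (simp add: scaleC_scaleC)
    finally show ?thesis using d by simp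
  qed
  define K where "K = (C + 1) / cmod \<mu>"
  have Tfb: "norm (Tf z) \<le> K * norm z" if z: "z \<in> dom A" for z
  proof -
    have "norm (app G (R (app A z)) - z) \<le> norm (app G (R (app A z))) + norm z" by (rule norm_triangle_ineq4)
    also have "\<dots> \<le> C * norm z + norm z" using bnd z by (simp add: R_def)
    finally have "norm (app G (R (app A z)) - z) \<le> (C + 1) * norm z" by (simp add: algebra_simps)
    then have "norm (Tf z) \<le> (1 / cmod \<mu>) * ((C + 1) * norm z)"
      unfolding Tf_def norm_scaleC using mu0 by (simp add: norm_divide divide_right_mono)
    then show ?thesis by (simp add: K_def)
  qed
  have Tfdiff: "Tf z1 - Tf z2 = Tf (z1 - z2)" if z: "z1 \<in> dom A" "z2 \<in> dom A" for z1 z2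
  proof -
    have zd: "z1 - z2 \<in> dom A" using linop_diff(1)[OF linA z] .
    have d: "Tf z1 - Tf z2 - Tf (z1 - z2) \<in> dom (G \<bullet>\<^sub>o\<^sub>p A)"
      using Tf z zd linop_diff(1)[OF linT] by meson
    have "shift (G \<bullet>\<^sub>o\<^sub>p A) \<mu> (Tf z1 - Tf z2 - Tf (z1 - z2)) = 0"
      using Tf z zd by (simp add: shift_diff[OF linT] linop_diff(1)[OF linT])
    then show ?thesis using kern[OF d] by simp
  qed
  show ?thesis
  proof (rule rho_intro[OF linT kern, where C = K])
    fix z
    have "z \<in> closure (dom A)" using selfadjoint_dense[OF saA] by simp
    then obtain zs where zs: "\<And>n. zs n \<in> dom A" "zs \<longlonglongrightarrow> z" by (meson closure_sequential)
    define xs where "xs n = Tf (zs n)" for n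
    have "Cauchy xs"
    proof (rule cauchy_lip[OF LIMSEQ_imp_Cauchy[OF zs(2)], where K = K])
      fix m n
      show "norm (xs m - xs n) \<le> K * norm (zs m - zs n)"
        unfolding xs_def Tfdiff[OF zs(1) zs(1)] using Tfb linop_diff(1)[OF linA zs(1) zs(1)] by blast
    qed
    then obtain x where x: "xs \<longlonglongrightarrow> x" using convergent_eq_Cauchy by blast
    have gr: "(xs n, zs n + \<mu> *\<^sub>C xs n) \<in> {(x, app (G \<bullet>\<^sub>o\<^sub>p A) x) | x. x \<in> dom (G \<bullet>\<^sub>o\<^sub>p A)}" for n
    proof -
      have "app (G \<bullet>\<^sub>o\<^sub>p A) (xs n) = zs n + \<mu> *\<^sub>C xs n"
        using Tf[OF zs(1)[of n]] by (simp add: xs_def shift_def algebra_simps)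
      then show ?thesis using Tf[OF zs(1)[of n]] by (auto simp: xs_def)
    qed
    have "(\<lambda>n. (xs n, zs n + \<mu> *\<^sub>C xs n)) \<longlonglongrightarrow> (x, z + \<mu> *\<^sub>C x)"
      by (intro tendsto_Pair x tendsto_add zs(2) bounded_linear.tendsto[OF bounded_linear_scaleC])
    then have "(x, z + \<mu> *\<^sub>C x) \<in> {(x, app (G \<bullet>\<^sub>o\<^sub>p A) x) | x. x \<in> dom (G \<bullet>\<^sub>o\<^sub>p A)}"
      using cl gr unfolding closed_op_def by (meson closed_sequentially)
    then have xd: "x \<in> dom (G \<bullet>\<^sub>o\<^sub>p A)" and ax: "app (G \<bullet>\<^sub>o\<^sub>p A) x = z + \<mu> *\<^sub>C x" by auto
    have sx: "shift (G \<bullet>\<^sub>o\<^sub>p A) \<mu> x = z" using ax by (simp add: shift_def)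
    have "(\<lambda>n. norm (xs n)) \<longlonglongrightarrow> norm x" by (intro tendsto_intros x)
    moreover have "(\<lambda>n. K * norm (zs n)) \<longlonglongrightarrow> K * norm z" by (intro tendsto_intros zs(2))
    ultimately have "norm x \<le> K * norm z"
      by (rule LIMSEQ_le) (use Tfb zs(1) xs_def in auto)
    then show "\<exists>x\<in>dom (G \<bullet>\<^sub>o\<^sub>p A). shift (G \<bullet>\<^sub>o\<^sub>p A) \<mu> x = z \<and> norm x \<le> K * norm z"
      using xd sx by blast
  qed
qed


theorem mainTheorem3:
  fixes A G :: "'a::chilbert_space op"
  assumes "selfadjoint A" and "selfadjoint G"
    and "(bounded_op G \<and> \<rho> (G \<bullet>\<^sub>o\<^sub>p A) \<noteq> {})
       \<or> (0 \<in> \<rho> G \<and> \<rho> (A \<bullet>\<^sub>o\<^sub>p G) \<noteq> {})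
       \<or> (is_adjoint (A \<bullet>\<^sub>o\<^sub>p G) (G \<bullet>\<^sub>o\<^sub>p A) \<and> \<rho> (A \<bullet>\<^sub>o\<^sub>p G) \<noteq> {})
       \<or> (\<rho> (A \<bullet>\<^sub>o\<^sub>p G) \<noteq> {} \<and> closed_op (G \<bullet>\<^sub>o\<^sub>p A) \<and>
          (\<exists>\<mu>\<in>\<rho> (A \<bullet>\<^sub>o\<^sub>p G) - {0}.
             \<exists>C. \<forall>x\<in>dom A. norm (app G (res (A \<bullet>\<^sub>o\<^sub>p G) \<mu> (app A x))) \<le> C * norm x))"
  shows "\<rho> (A \<bullet>\<^sub>o\<^sub>p G) \<noteq> {} \<and> \<rho> (G \<bullet>\<^sub>o\<^sub>p A) \<noteq> {}"
  using assms(3)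
proof (elim disjE conjE)
  assume "bounded_op G" "\<rho> (G \<bullet>\<^sub>o\<^sub>p A) \<noteq> {}"
  then obtain \<mu> where "\<mu> \<in> \<rho> (G \<bullet>\<^sub>o\<^sub>p A)" by blast
  then show ?thesis using case_a[OF assms(1,2) \<open>bounded_op G\<close>] by blast
next
  assume "0 \<in> \<rho> G" "\<rho> (A \<bullet>\<^sub>o\<^sub>p G) \<noteq> {}"
  then obtain \<mu> where "\<mu> \<in> \<rho> (A \<bullet>\<^sub>o\<^sub>p G)" by blast
  then show ?thesis using case_b[OF assms(1,2) \<open>0 \<in> \<rho> G\<close>] by blast
next
  assume adj: "is_adjoint (A \<bullet>\<^sub>o\<^sub>p G) (G \<bullet>\<^sub>o\<^sub>p A)" and "\<rho> (A \<bullet>\<^sub>o\<^sub>p G) \<noteq> {}"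
  then obtain \<mu> where mu: "\<mu> \<in> \<rho> (A \<bullet>\<^sub>o\<^sub>p G)" by blast
  have linA: "linop A" and linG: "linop G" using assms(1,2) by (simp_all add: selfadjoint_linop)
  show ?thesis using mu case_c[OF adj linop_prod[OF linA linG] linop_prod[OF linG linA] mu] by blast
next
  assume "\<rho> (A \<bullet>\<^sub>o\<^sub>p G) \<noteq> {}" and cl: "closed_op (G \<bullet>\<^sub>o\<^sub>p A)"
    and "\<exists>\<mu>\<in>\<rho> (A \<bullet>\<^sub>o\<^sub>p G) - {0}.
             \<exists>C. \<forall>x\<in>dom A. norm (app G (res (A \<bullet>\<^sub>o\<^sub>p G) \<mu> (app A x))) \<le> C * norm x"
  then obtain \<mu> C where mu: "\<mu> \<in> \<rho> (A \<bullet>\<^sub>o\<^sub>p G)" "\<mu> \<noteq> 0"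
    and b: "\<forall>x\<in>dom A. norm (app G (res (A \<bullet>\<^sub>o\<^sub>p G) \<mu> (app A x))) \<le> C * norm x" by blast
  show ?thesis using mu case_d[OF assms(1,2) cl mu b] by blast
qed

end
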